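(* Let $C$ and $D$ be convex subsets of a real topological vector space $X$. Then $\operatorname{fri} C+\operatorname{fri} D\subseteq\operatorname{fri}(C+D)$, where $+$ denotes Minkowski sum.
   Context: For a convex set $C$, a convex subset $F\subseteq C$ is a face of $C$ if for every $x\in F$ and all $y,z\in C$ with $x\in(y,z)=\{(1-t)y+tz:t\in(0,1)\}$ we have $y,z\in F$; $F_{\min}(x,C)$ is the intersection of all faces of $C$ containing $x\in C$. The face relative interior is $\operatorname{fri} C=\{x\in C: C\subseteq\overline{F_{\min}(x,C)}\}$. *)

theory Defs
  imports "HOL-Analysis.Analysis"
begin

class real_tvs = real_vector + topological_space +
  assumes tvs_continuous_add:
    "\<And>x y :: 'a. filterlim (\<lambda>p. fst p + snd p) (nhds (x + y)) (nhds x \<times>\<^sub>F nhds y)"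
  assumes tvs_continuous_scaleR:
    "\<And>(c::real) (x::'a). filterlim (\<lambda>p. fst p *\<^sub>R snd p) (nhds (c *\<^sub>R x)) (nhds c \<times>\<^sub>F nhds x)"

definition F_min :: "'a::real_vector \<Rightarrow> 'a set \<Rightarrow> 'a set" where
  "F_min x C = \<Inter> {F. F face_of C \<and> x \<in> F}"

definition fri :: "'a::{real_vector,topological_space} set \<Rightarrow> 'a set" where
  "fri C = {x \<in> C. C \<subseteq> closure (F_min x C)}"

definition minkowski_sum :: "'a::real_vector set \<Rightarrow> 'a set \<Rightarrow> 'a set" where
  "minkowski_sum A B = {a + b | a b. a \<in> A \<and> b \<in> B}"

end

theory Submission
  imports Defs
begin

lemma closure_add_sub:
  fixes A B :: "'a::real_tvs set"
  assumes c: "c \<in> closure A" and d: "d \<in> closure B"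
  shows "c + d \<in> closure (minkowski_sum A B)"
  unfolding closure_iff_nhds_not_empty
proof (intro allI impI)
  fix T S assume ST: "S \<subseteq> T" and oS: "open S" and cd: "c + d \<in> S"
  have "eventually (\<lambda>p. fst p + snd p \<in> S) (nhds c \<times>\<^sub>F nhds d)"
    using topological_tendstoD[OF tvs_continuous_add oS cd] by simp
  then obtain Pf Pg where Pf: "eventually Pf (nhds c)" and Pg: "eventually Pg (nhds d)"
    and P: "\<forall>x y. Pf x \<longrightarrow> Pg y \<longrightarrow> x + y \<in> S"
    unfolding eventually_prod_filter by auto
  from Pf obtain U where U: "open U" "c \<in> U" "\<forall>x\<in>U. Pf x" unfolding eventually_nhds by auto
  from Pg obtain V where V: "open V" "d \<in> V" "\<forall>x\<in>V. Pg x" unfolding eventually_nhds by auto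
  from c U obtain a where a: "a \<in> A" "a \<in> U" unfolding closure_iff_nhds_not_empty by blast
  from d V obtain b where b: "b \<in> B" "b \<in> V" unfolding closure_iff_nhds_not_empty by blast
  have "a + b \<in> minkowski_sum A B" using a b unfolding minkowski_sum_def by blast
  moreover have "a + b \<in> T" using P U V a b ST by blast
  ultimately show "minkowski_sum A B \<inter> T \<noteq> {}" by blast
qed

theorem proposition4p4:
  fixes C D :: "'a::real_tvs set"
  assumes "convex C" and "convex D"
  shows "minkowski_sum (fri C) (fri D) \<subseteq> fri (minkowski_sum C D)"
proof
  fix z assume "z \<in> minkowski_sum (fri C) (fri D)"
  then obtain x y where z: "z = x + y" and x: "x \<in> fri C" and y: "y \<in> fri D"
    unfolding minkowski_sum_def by blast
  have xC: "x \<in> C" and yD: "y \<in> D" and cC: "C \<subseteq> closure (F_min x C)"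
    and cD: "D \<subseteq> closure (F_min y D)" using x y unfolding fri_def by auto
  have sub: "c + d \<in> G" if G: "G face_of minkowski_sum C D" "x + y \<in> G"
    and c: "c \<in> F_min x C" and d: "d \<in> F_min y D" for G c d
  proof -
    have cG: "convex G" using G(1) face_of_def by blast
    define H where "H = {c \<in> C. c + y \<in> G}"
    have "H face_of C" unfolding face_of_def
    proof (intro conjI ballI impI)
      show "H \<subseteq> C" unfolding H_def by blast
      show "convex H" unfolding H_def convex_def
      proof (intro allI impI ballI, clarify)
        fix u v :: real and a b assume h: "a \<in> C" "a + y \<in> G" "b \<in> C" "b + y \<in> G" "0 \<le> u" "0 \<le> v" "u + v = 1"
        have "u *\<^sub>R (a + y) + v *\<^sub>R (b + y) \<in> G" using cG h unfolding convex_def by blast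
        moreover have "u *\<^sub>R (a + y) + v *\<^sub>R (b + y) = (u *\<^sub>R a + v *\<^sub>R b) + y"
          using h(7) by (simp add: algebra_simps flip: scaleR_add_left)
        ultimately show "u *\<^sub>R a + v *\<^sub>R b \<in> C \<and> u *\<^sub>R a + v *\<^sub>R b + y \<in> G"
          using \<open>convex C\<close> h unfolding convex_def by auto
      qed
    next
      fix a b w assume h: "a \<in> C" "b \<in> C" "w \<in> H" "w \<in> open_segment a b"
      have "y + w \<in> open_segment (y + a) (y + b)" using h(4) by simp
      moreover have "y + a \<in> minkowski_sum C D" "y + b \<in> minkowski_sum C D"
        using h yD unfolding minkowski_sum_def by (auto simp: add.commute)
      moreover have "y + w \<in> G" using h(3) unfolding H_def by (simp add: add.commute)
      ultimately have "y + a \<in> G" "y + b \<in> G" using face_ofD[OF G(1)] by blast+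
      then show "a \<in> H" "b \<in> H" using h unfolding H_def by (auto simp: add.commute)
    qed
    moreover have "x \<in> H" using xC G unfolding H_def by auto
    ultimately have FH: "F_min x C \<subseteq> H" unfolding F_min_def by blast
    define K where "K = {d \<in> D. \<forall>c\<in>F_min x C. c + d \<in> G}"
    have "K face_of D" unfolding face_of_def
    proof (intro conjI ballI impI)
      show "K \<subseteq> D" unfolding K_def by blast
      show "convex K" unfolding K_def convex_def
      proof (intro allI impI ballI, clarify, intro conjI ballI)
        fix u v :: real and a b assume h: "a \<in> D" "\<forall>c\<in>F_min x C. c + a \<in> G" "b \<in> D"
          "\<forall>c\<in>F_min x C. c + b \<in> G" "0 \<le> u" "0 \<le> v" "u + v = 1"
        show "u *\<^sub>R a + v *\<^sub>R b \<in> D" using \<open>convex D\<close> h unfolding convex_def by auto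
        fix c assume cc: "c \<in> F_min x C"
        have "u *\<^sub>R (c + a) + v *\<^sub>R (c + b) \<in> G" using cG h cc unfolding convex_def by blast
        moreover have "u *\<^sub>R (c + a) + v *\<^sub>R (c + b) = c + (u *\<^sub>R a + v *\<^sub>R b)"
          using h(7) by (simp add: algebra_simps flip: scaleR_add_left)
        ultimately show "c + (u *\<^sub>R a + v *\<^sub>R b) \<in> G" by simp
      qed
    next
      fix a b w assume h: "a \<in> D" "b \<in> D" "w \<in> K" "w \<in> open_segment a b"
      have "c + a \<in> G \<and> c + b \<in> G" if cc: "c \<in> F_min x C" for c
      proof -
        have "c \<in> C" using cc FH unfolding H_def by blast
        have "c + w \<in> open_segment (c + a) (c + b)" using h(4) by simp
        moreover have "c + a \<in> minkowski_sum C D" "c + b \<in> minkowski_sum C D"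
          using h \<open>c \<in> C\<close> unfolding minkowski_sum_def by auto
        moreover have "c + w \<in> G" using h(3) cc unfolding K_def by blast
        ultimately show ?thesis using face_ofD[OF G(1)] by blast
      qed
      then show "a \<in> K" "b \<in> K" using h unfolding K_def by auto
    qed
    moreover have "y \<in> K" using yD FH unfolding K_def H_def by auto
    ultimately have "F_min y D \<subseteq> K" unfolding F_min_def by blast
    then show ?thesis using c d unfolding K_def by blast
  qed
  have msub: "minkowski_sum (F_min x C) (F_min y D) \<subseteq> F_min (x + y) (minkowski_sum C D)"
  proof
    fix w assume "w \<in> minkowski_sum (F_min x C) (F_min y D)"
    then obtain c d where w: "w = c + d" "c \<in> F_min x C" "d \<in> F_min y D"
      unfolding minkowski_sum_def by blast
    show "w \<in> F_min (x + y) (minkowski_sum C D)"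
      unfolding F_min_def using sub w by blast
  qed
  have zCD: "z \<in> minkowski_sum C D" using z xC yD unfolding minkowski_sum_def by blast
  have "minkowski_sum C D \<subseteq> closure (F_min z (minkowski_sum C D))"
  proof
    fix w assume "w \<in> minkowski_sum C D"
    then obtain c d where w: "w = c + d" "c \<in> C" "d \<in> D" unfolding minkowski_sum_def by blast
    have "w \<in> closure (minkowski_sum (F_min x C) (F_min y D))"
      using closure_add_sub[of c "F_min x C" d "F_min y D"] w cC cD by blast
    then show "w \<in> closure (F_min z (minkowski_sum C D))"
      using closure_mono[OF msub] z by blast
  qed
  then show "z \<in> fri (minkowski_sum C D)" using zCD unfolding fri_def by blast
qed

end
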